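(* Let $N\ge 2$ and let $\mathcal{A}$ be an $M\times N$ circular Florentine rectangle over $\mathbb{Z}_N$ with rows $\pi_0,\dots,\pi_{M-1}$. For each $i$ let $\pi_i^{-1}$ denote the inverse permutation of $\pi_i$. Then each $\pi_i^{-1}$ is a permutation of $\mathbb{Z}_N$, and for all $0\le i\neq r\le M-1$ the map $x\mapsto \pi_i^{-1}(x)-\pi_r^{-1}(x) \pmod N$ is a permutation of $\mathbb{Z}_N$.
   Context: An $M\times N$ circular Florentine rectangle (CFR) over $\mathbb{Z}_N$ is an $M\times N$ array whose rows, viewed as maps $\pi_i:\mathbb{Z}_N\to\mathbb{Z}_N$ ($\pi_i(x)$ is the entry in row $i$, column $x$), are permutations of $\mathbb{Z}_N$, and such that for every $m\in\mathbb{Z}_N\setminus\{0\}$ and all $0\le i,j\le M-1$, $x,y\in\mathbb{Z}_N$, one has $(\pi_i(x),\pi_i(x+m))=(\pi_j(y),\pi_j(y+m))$ (indices modulo $N$) if and only if $i=j$ and $x=y$. *)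

theory Defs
  imports Main
begin

text \<open>Z_N is modelled by the carrier {0..<N} of naturals with arithmetic mod N.
  An M x N array is a function pi :: nat => nat => nat; row i (i < M) is the
  map x \<mapsto> pi i x on {0..<N}.\<close>

definition CFR :: "nat \<Rightarrow> nat \<Rightarrow> (nat \<Rightarrow> nat \<Rightarrow> nat) \<Rightarrow> bool" where
  "CFR M N \<pi> \<longleftrightarrow>
     (\<forall>i<M. bij_betw (\<pi> i) {0..<N} {0..<N}) \<and>
     (\<forall>m\<in>{1..<N}. \<forall>i<M. \<forall>j<M. \<forall>x<N. \<forall>y<N.
        ((\<pi> i x, \<pi> i ((x + m) mod N)) = (\<pi> j y, \<pi> j ((y + m) mod N)))
        \<longleftrightarrow> (i = j \<and> x = y))"

end

theory Submission
  imports Defs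
begin

lemma key:
  fixes N m a b :: nat and c d :: nat
  assumes "a < N" "b < N" "c < N" "d < N" "a \<noteq> b"
    "(int b - int a) mod int N = (int d - int c) mod int N"
  defines "m \<equiv> nat ((int b - int a) mod int N)"
  shows "m \<in> {1..<N} \<and> (a + m) mod N = b \<and> (c + m) mod N = d"
proof -
  have N: "N > 0" using assms by auto
  have m0: "int m = (int b - int a) mod int N" unfolding m_def using N by simp
  have "m < N" using m0 N by (metis int_ops(1) of_nat_less_iff pos_mod_bound)
  moreover have "m \<noteq> 0"
  proof
    assume "m = 0"
    then have "int N dvd (int b - int a)" using m0 by (simp add: dvd_eq_mod_eq_0)
    then obtain k where k: "int b - int a = int N * k" by (auto simp: dvd_def)
    have "k = 0"
    proof (rule ccontr)
      assume "k \<noteq> 0"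
      then have "1 \<le> \<bar>k\<bar>" by simp
      then have "int N * 1 \<le> int N * \<bar>k\<bar>" by (rule mult_left_mono) simp
      then have "\<bar>int N * k\<bar> \<ge> int N" by (simp add: abs_mult)
      then show False using k assms(1,2) by linarith
    qed
    then show False using k assms(5) by simp
  qed
  moreover have "int ((a + m) mod N) = int b"
  proof -
    have "int ((a + m) mod N) = (int a + int m) mod int N" by (simp add: of_nat_mod)
    also have "\<dots> = (int a + (int b - int a)) mod int N" using m0 by (metis mod_add_right_eq)
    finally show ?thesis using assms(2) by simp
  qed
  moreover have "int ((c + m) mod N) = int d"
  proof -
    have "int ((c + m) mod N) = (int c + int m) mod int N" by (simp add: of_nat_mod)
    also have "\<dots> = (int c + (int d - int c)) mod int N" using m0 assms(6) by (metis mod_add_right_eq)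
    finally show ?thesis using assms(4) by simp
  qed
  ultimately show ?thesis by auto
qed

theorem lemma4:
  fixes M N :: nat and \<pi> :: "nat \<Rightarrow> nat \<Rightarrow> nat"
  assumes "N \<ge> 2" and "CFR M N \<pi>"
  shows "(\<forall>i<M. bij_betw (inv_into {0..<N} (\<pi> i)) {0..<N} {0..<N}) \<and>
         (\<forall>i<M. \<forall>r<M. i \<noteq> r \<longrightarrow>
            bij_betw (\<lambda>x. nat ((int (inv_into {0..<N} (\<pi> i) x)
                                 - int (inv_into {0..<N} (\<pi> r) x)) mod int N))
                     {0..<N} {0..<N})"
proof -
  have bij: "\<And>i. i < M \<Longrightarrow> bij_betw (\<pi> i) {0..<N} {0..<N}"
    using assms(2) unfolding CFR_def by blast
  have cfr: "\<And>m i j x y. m \<in> {1..<N} \<Longrightarrow> i < M \<Longrightarrow> j < M \<Longrightarrow> x < N \<Longrightarrow> y < N \<Longrightarrow>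
     \<pi> i x = \<pi> j y \<Longrightarrow> \<pi> i ((x + m) mod N) = \<pi> j ((y + m) mod N) \<Longrightarrow> i = j \<and> x = y"
    using assms(2) unfolding CFR_def by blast
  have ibij: "\<And>i. i < M \<Longrightarrow> bij_betw (inv_into {0..<N} (\<pi> i)) {0..<N} {0..<N}"
    using bij bij_betw_inv_into by blast
  have N: "N > 0" using assms(1) by simp
  show ?thesis
  proof (intro conjI allI impI)
    fix i assume "i < M" then show "bij_betw (inv_into {0..<N} (\<pi> i)) {0..<N} {0..<N}" by (rule ibij)
  next
    fix i r assume i: "i < M" and r: "r < M" and ir: "i \<noteq> r"
    define f where "f = inv_into {0..<N} (\<pi> i)"
    define g where "g = inv_into {0..<N} (\<pi> r)"
    define h where "h = (\<lambda>x. nat ((int (f x) - int (g x)) mod int N))"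
    have fb: "bij_betw f {0..<N} {0..<N}" using ibij[OF i] f_def by simp
    have gb: "bij_betw g {0..<N} {0..<N}" using ibij[OF r] g_def by simp
    have fi: "\<And>x. x < N \<Longrightarrow> \<pi> i (f x) = x" unfolding f_def
      using bij[OF i] by (simp add: bij_betw_def f_inv_into_f)
    have gi: "\<And>x. x < N \<Longrightarrow> \<pi> r (g x) = x" unfolding g_def
      using bij[OF r] by (simp add: bij_betw_def f_inv_into_f)
    have fN: "\<And>x. x < N \<Longrightarrow> f x < N" using fb by (auto simp: bij_betw_def)
    have gN: "\<And>x. x < N \<Longrightarrow> g x < N" using gb by (auto simp: bij_betw_def)
    have sub: "h ` {0..<N} \<subseteq> {0..<N}"
    proof
      fix z assume "z \<in> h ` {0..<N}"
      then obtain x where "z = h x" by auto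
      then have "int z = (int (f x) - int (g x)) mod int N" unfolding h_def using N by simp
      then show "z \<in> {0..<N}" using N
        by (metis atLeastLessThan_iff le0 of_nat_less_iff pos_mod_bound of_nat_0_less_iff)
    qed
    have inj: "inj_on h {0..<N}"
    proof (rule inj_onI, rule ccontr)
      fix x y assume x: "x \<in> {0..<N}" and y: "y \<in> {0..<N}" and e: "h x = h y" and xy: "x \<noteq> y"
      have e2: "(int (f x) - int (g x)) mod int N = (int (f y) - int (g y)) mod int N"
        using e N unfolding h_def by (metis eq_nat_nat_iff of_nat_0_less_iff pos_mod_sign)
      have e3: "(int (f y) - int (f x)) mod int N = (int (g y) - int (g x)) mod int N"
      proof -
        have "(int (f y) - int (f x)) mod int N
            = ((int (f y) - int (g y)) + (int (g y) - int (g x)) - (int (f x) - int (g x))) mod int N"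
          by simp
        also have "\<dots> = ((int (f y) - int (g y)) + (int (g y) - int (g x)) - (int (f y) - int (g y))) mod int N"
          using e2 by (metis mod_diff_right_eq)
        finally show ?thesis by simp
      qed
      have fne: "f x \<noteq> f y" using fb x y xy by (metis bij_betw_def inj_onD)
      obtain m where m: "m \<in> {1..<N}" "(f x + m) mod N = f y" "(g x + m) mod N = g y"
        using key[OF fN[of x] fN[of y] gN[of x] gN[of y] fne e3] x y by auto
      have "i = r \<and> f x = g x"
        using cfr[OF m(1) i r fN[of x] gN[of x]] m fi gi x y by auto
      then show False using ir by simp
    qed
    have "h ` {0..<N} = {0..<N}" using endo_inj_surj[OF _ sub inj] by simp
    then have "bij_betw h {0..<N} {0..<N}" using inj by (simp add: bij_betw_def)
    then show "bij_betw (\<lambda>x. nat ((int (inv_into {0..<N} (\<pi> i) x)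
                                 - int (inv_into {0..<N} (\<pi> r) x)) mod int N))
                     {0..<N} {0..<N}" unfolding h_def f_def g_def .
  qed
qed

end
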